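(* On the event described in Lemma 2.4 (namely: (a) whenever $p_j$ and $a_i$ interview each other, $i\le j+8\log n$; and (b) whenever the algorithm considers a proposal to $p_j$, all $p_{j'}$ with $j'<\min(j,n-8\log n)$ are matched), suppose the Adaptive Algorithm is considering the proposal between applicant $a_{i^*}$ and position $p_{j^*}$. Then for every $k\le j^*$, the current matching $\mu$ satisfies $$\big|\{(a_i,p_j)\in\mu : i<k,\ j\ge k\}\big|\le 8\log n.$$
   Context: Logarithms are base 2. Model. Let $A=\{a_1,\dots,a_n\}$ be a set of applicants and $P=\{p_1,\dots,p_n\}$ a set of positions. Each applicant $a_i$ has a publicly known value $u_i\in\mathbb R$ and each position $p_j$ a publicly known value $v_j\in\mathbb R$, indexed so that $u_1\ge u_2\ge\dots\ge u_n$ and $v_1\ge v_2\ge\dots\ge v_n$. The random variables $\epsilon^A_{ij}$, $\epsilon^P_{ji}$ ($i,j\in[n]$) are mutually independent and identically distributed according to a known distribution symmetric about $0$ (mean zero). The utility of $a_i$ for $p_j$ is $v_j+\epsilon^A_{ij}$ and the utility of $p_j$ for $a_i$ is $u_i+\epsilon^P_{ji}$; the values $\epsilon^A_{ij},\epsilon^P_{ji}$ become known only when $a_i$ and $p_j$ interview each other. The observed utility $v^o_{ij}$ of $a_i$ for $p_j$ equals $v_j+\epsilon^A_{ij}$ if $a_i,p_j$ have interviewed and $v_j$ otherwise; $u^o_{ji}$ is defined symmetrically ($u_i+\epsilon^P_{ji}$ or $u_i$). Write $p_j\succ_{a_i}p_{j'}$ iff $v^o_{ij}>v^o_{ij'}$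 and $a_i\succ_{p_j}a_{i'}$ iff $u^o_{ji}>u^o_{ji'}$ (ties broken in favor of the smaller index); every agent prefers any partner to being unmatched. For a matching $\mu$, $\mu(x)$ denotes the partner of $x$ ($\emptyset$ if unmatched). Adaptive Algorithm. Initially all agents are unmatched and $v^o_{ij}=v_j$, $u^o_{ji}=u_i$ for all $i,j$. For an unmatched applicant $a$, let $\beta(a)$ be $a$'s most preferred position (w.r.t. current observed utilities) that has not yet rejected $a$. While some applicant is unmatched: let $j^*$ be the smallest index such that $\beta(a_i)=p_{j^*}$ for some unmatched $a_i$; let $a_{i^*}$ be $p_{j^*}$'s favorite applicant among $\{a_i:\beta(a_i)=p_{j^*},\mu(a_i)=\emptyset\}$. If $a_{i^*},p_{j^*}$ have not interviewed and ($i^*\le j^*$ or $a_{i^*}\succ_{p_{j^*}}\mu(p_{j^*})$), then they interview and $v^o_{i^*j^*},u^o_{j^*i^*}$ are updated. Otherwise: if $\mu(p_{j^*})\succ_{p_{j^*}}a_{i^*}$, then $p_{j^*}$ rejects $a_{i^*}$; else $p_{j^*}$ rejects $\mu(p_{j^*})$ (if nonempty) and $a_{i^*},p_{j^*}$ become matched. When all applicants are matched, output $\mu$. *)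

theory Defs
  imports Complex_Main
begin

text \<open>Agents are indexed 1..n: applicant a_i is i, position p_j is j.
  A state of the Adaptive Algorithm records the matching (applicant to position),
  the set of interviewed pairs (i,j), and the set of rejections (i,j) meaning
  "p_j has rejected a_i".\<close>

record st =
  mu   :: "nat \<Rightarrow> nat option"
  intv :: "(nat \<times> nat) set"
  rej  :: "(nat \<times> nat) set"

definition init_st :: st where
  "init_st = \<lparr>mu = (\<lambda>_. None), intv = {}, rej = {}\<rparr>"

definition vo :: "(nat \<Rightarrow> real) \<Rightarrow> (nat \<Rightarrow> nat \<Rightarrow> real) \<Rightarrow> (nat \<times> nat) set \<Rightarrow> nat \<Rightarrow> nat \<Rightarrow> real" where
  "vo v eA I i j = v j + (if (i, j) \<in> I then eA i j else 0)"

definition uo :: "(nat \<Rightarrow> real) \<Rightarrow> (nat \<Rightarrow> nat \<Rightarrow> real) \<Rightarrow> (nat \<times> nat) set \<Rightarrow> nat \<Rightarrow> nat \<Rightarrow> real" where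
  "uo u eP I j i = u i + (if (i, j) \<in> I then eP j i else 0)"

definition prefA :: "(nat \<Rightarrow> real) \<Rightarrow> (nat \<Rightarrow> nat \<Rightarrow> real) \<Rightarrow> (nat \<times> nat) set \<Rightarrow> nat \<Rightarrow> nat \<Rightarrow> nat \<Rightarrow> bool" where
  "prefA v eA I i j j' \<longleftrightarrow> vo v eA I i j > vo v eA I i j' \<or> (vo v eA I i j = vo v eA I i j' \<and> j < j')"

definition prefP :: "(nat \<Rightarrow> real) \<Rightarrow> (nat \<Rightarrow> nat \<Rightarrow> real) \<Rightarrow> (nat \<times> nat) set \<Rightarrow> nat \<Rightarrow> nat \<Rightarrow> nat \<Rightarrow> bool" where
  "prefP u eP I j i i' \<longleftrightarrow> uo u eP I j i > uo u eP I j i' \<or> (uo u eP I j i = uo u eP I j i' \<and> i < i')"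

definition avail :: "nat \<Rightarrow> st \<Rightarrow> nat \<Rightarrow> nat set" where
  "avail n s i = {j \<in> {1..n}. (i, j) \<notin> rej s}"

definition beta :: "nat \<Rightarrow> (nat \<Rightarrow> real) \<Rightarrow> (nat \<Rightarrow> nat \<Rightarrow> real) \<Rightarrow> st \<Rightarrow> nat \<Rightarrow> nat" where
  "beta n v eA s i = (THE j. j \<in> avail n s i \<and> (\<forall>j' \<in> avail n s i. j' \<noteq> j \<longrightarrow> prefA v eA (intv s) i j j'))"

definition unmatched :: "nat \<Rightarrow> st \<Rightarrow> nat set" where
  "unmatched n s = {i \<in> {1..n}. mu s i = None}"

definition proposers :: "nat \<Rightarrow> st \<Rightarrow> nat set" where
  "proposers n s = {i \<in> unmatched n s. avail n s i \<noteq> {}}"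

definition jstar :: "nat \<Rightarrow> (nat \<Rightarrow> real) \<Rightarrow> (nat \<Rightarrow> nat \<Rightarrow> real) \<Rightarrow> st \<Rightarrow> nat" where
  "jstar n v eA s = Min (beta n v eA s ` proposers n s)"

definition istar :: "nat \<Rightarrow> (nat \<Rightarrow> real) \<Rightarrow> (nat \<Rightarrow> real) \<Rightarrow> (nat \<Rightarrow> nat \<Rightarrow> real) \<Rightarrow> (nat \<Rightarrow> nat \<Rightarrow> real) \<Rightarrow> st \<Rightarrow> nat" where
  "istar n u v eA eP s =
     (let j = jstar n v eA s; S = {i \<in> proposers n s. beta n v eA s i = j}
      in THE i. i \<in> S \<and> (\<forall>i' \<in> S. i' \<noteq> i \<longrightarrow> prefP u eP (intv s) j i i'))"

definition partner :: "st \<Rightarrow> nat \<Rightarrow> nat option" where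
  "partner s j = (if \<exists>i. mu s i = Some j then Some (THE i. mu s i = Some j) else None)"

definition better_than_cur :: "(nat \<Rightarrow> real) \<Rightarrow> (nat \<Rightarrow> nat \<Rightarrow> real) \<Rightarrow> st \<Rightarrow> nat \<Rightarrow> nat \<Rightarrow> bool" where
  "better_than_cur u eP s j i =
     (case partner s j of None \<Rightarrow> True | Some i' \<Rightarrow> prefP u eP (intv s) j i i')"

definition alg_step :: "nat \<Rightarrow> (nat \<Rightarrow> real) \<Rightarrow> (nat \<Rightarrow> real) \<Rightarrow> (nat \<Rightarrow> nat \<Rightarrow> real) \<Rightarrow> (nat \<Rightarrow> nat \<Rightarrow> real) \<Rightarrow> st \<Rightarrow> st" where
  "alg_step n u v eA eP s =
     (let j = jstar n v eA s; i = istar n u v eA eP s in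
      if (i, j) \<notin> intv s \<and> (i \<le> j \<or> better_than_cur u eP s j i)
      then s\<lparr>intv := insert (i, j) (intv s)\<rparr>
      else (case partner s j of
              Some i' \<Rightarrow>
                if prefP u eP (intv s) j i' i
                then s\<lparr>rej := insert (i, j) (rej s)\<rparr>
                else s\<lparr>mu := (mu s)(i' := None, i := Some j), rej := insert (i', j) (rej s)\<rparr>
            | None \<Rightarrow> s\<lparr>mu := (mu s)(i := Some j)\<rparr>))"

definition loop_step :: "nat \<Rightarrow> (nat \<Rightarrow> real) \<Rightarrow> (nat \<Rightarrow> real) \<Rightarrow> (nat \<Rightarrow> nat \<Rightarrow> real) \<Rightarrow> (nat \<Rightarrow> nat \<Rightarrow> real) \<Rightarrow> st \<Rightarrow> st \<Rightarrow> bool" where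
  "loop_step n u v eA eP s s' \<longleftrightarrow> unmatched n s \<noteq> {} \<and> s' = alg_step n u v eA eP s"

definition reachable :: "nat \<Rightarrow> (nat \<Rightarrow> real) \<Rightarrow> (nat \<Rightarrow> real) \<Rightarrow> (nat \<Rightarrow> nat \<Rightarrow> real) \<Rightarrow> (nat \<Rightarrow> nat \<Rightarrow> real) \<Rightarrow> st \<Rightarrow> bool" where
  "reachable n u v eA eP s \<longleftrightarrow> (loop_step n u v eA eP)\<^sup>*\<^sup>* init_st s"

definition considering :: "nat \<Rightarrow> (nat \<Rightarrow> real) \<Rightarrow> (nat \<Rightarrow> real) \<Rightarrow> (nat \<Rightarrow> nat \<Rightarrow> real) \<Rightarrow> (nat \<Rightarrow> nat \<Rightarrow> real) \<Rightarrow> st \<Rightarrow> bool" where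
  "considering n u v eA eP s \<longleftrightarrow> reachable n u v eA eP s \<and> unmatched n s \<noteq> {}"

definition event_2_4 :: "nat \<Rightarrow> (nat \<Rightarrow> real) \<Rightarrow> (nat \<Rightarrow> real) \<Rightarrow> (nat \<Rightarrow> nat \<Rightarrow> real) \<Rightarrow> (nat \<Rightarrow> nat \<Rightarrow> real) \<Rightarrow> bool" where
  "event_2_4 n u v eA eP \<longleftrightarrow>
     (\<forall>s. reachable n u v eA eP s \<longrightarrow>
        (\<forall>(i, j) \<in> intv s. real i \<le> real j + 8 * log 2 (real n))) \<and>
     (\<forall>s. considering n u v eA eP s \<longrightarrow>
        (\<forall>j' \<in> {1..n}. real j' < min (real (jstar n v eA s)) (real n - 8 * log 2 (real n))
            \<longrightarrow> (\<exists>i. mu s i = Some j')))"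

end

theory Submission
  imports Defs
begin

lemma max_ex1:
  assumes fin: "finite A" and ne: "A \<noteq> {}"
    and tr: "\<And>x y z. R x y \<Longrightarrow> R y z \<Longrightarrow> R x z"
    and asy: "\<And>x y. R x y \<Longrightarrow> \<not> R y x"
    and tot: "\<And>x y. x \<noteq> y \<Longrightarrow> R x y \<or> R y x"
  shows "\<exists>!x. x \<in> A \<and> (\<forall>y\<in>A. y \<noteq> x \<longrightarrow> R x y)"
proof -
  have "\<exists>x. x \<in> A \<and> (\<forall>y\<in>A. y \<noteq> x \<longrightarrow> R x y)"
    using fin ne
  proof (induction A rule: finite_ne_induct)
    case (singleton x) then show ?case by auto
  next
    case (insert x F)
    then obtain m where m: "m \<in> F" "\<forall>y\<in>F. y \<noteq> m \<longrightarrow> R m y" by blast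
    show ?case
    proof (cases "R x m")
      case True
      have "\<forall>y\<in>insert x F. y \<noteq> x \<longrightarrow> R x y"
      proof (intro ballI impI)
        fix y assume "y \<in> insert x F" "y \<noteq> x"
        then have "y \<in> F" by simp
        show "R x y"
        proof (cases "y = m")
          case True then show ?thesis using \<open>R x m\<close> by simp
        next
          case False then have "R m y" using m \<open>y \<in> F\<close> by blast
          then show ?thesis using tr \<open>R x m\<close> by blast
        qed
      qed
      then show ?thesis by blast
    next
      case False
      then have "m \<noteq> x" using insert.hyps m by auto
      then have "R m x" using tot False by blast
      then show ?thesis using m by auto
    qed
  qed
  then obtain x where x: "x \<in> A" "\<forall>y\<in>A. y \<noteq> x \<longrightarrow> R x y" by blast
  show ?thesis
  proof (rule ex1I[of _ x])
    show "x \<in> A \<and> (\<forall>y\<in>A. y \<noteq> x \<longrightarrow> R x y)" using x by blast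
  next
    fix x2 assume x2: "x2 \<in> A \<and> (\<forall>y\<in>A. y \<noteq> x2 \<longrightarrow> R x2 y)"
    show "x2 = x"
    proof (rule ccontr)
      assume ne: "x2 \<noteq> x"
      have "x \<noteq> x2" using ne by simp
      then have "R x2 x" using x2 x(1) by simp
      moreover have "R x x2" using x ne x2 by simp
      ultimately show False using asy by simp
    qed
  qed
qed

lemma prefA_trans: "prefA v eA I i a b \<Longrightarrow> prefA v eA I i b c \<Longrightarrow> prefA v eA I i a c"
  unfolding prefA_def by (elim disjE conjE) auto
lemma prefA_asym: "prefA v eA I i a b \<Longrightarrow> \<not> prefA v eA I i b a"
  unfolding prefA_def by auto
lemma prefA_tot: "a \<noteq> b \<Longrightarrow> prefA v eA I i a b \<or> prefA v eA I i b a"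
  unfolding prefA_def by auto
lemma prefP_trans: "prefP u eP I j a b \<Longrightarrow> prefP u eP I j b c \<Longrightarrow> prefP u eP I j a c"
  unfolding prefP_def by (elim disjE conjE) auto
lemma prefP_asym: "prefP u eP I j a b \<Longrightarrow> \<not> prefP u eP I j b a"
  unfolding prefP_def by auto
lemma prefP_tot: "a \<noteq> b \<Longrightarrow> prefP u eP I j a b \<or> prefP u eP I j b a"
  unfolding prefP_def by auto

lemma beta_in:
  assumes "avail n s i \<noteq> {}"
  shows "beta n v eA s i \<in> avail n s i"
proof -
  have fin: "finite (avail n s i)" unfolding avail_def by auto
  have "\<exists>!j. j \<in> avail n s i \<and> (\<forall>j' \<in> avail n s i. j' \<noteq> j \<longrightarrow> prefA v eA (intv s) i j j')"
    by (rule max_ex1[where R="\<lambda>a b. prefA v eA (intv s) i a b", OF fin assms prefA_trans prefA_asym prefA_tot])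
  from theI'[OF this] show ?thesis unfolding beta_def by blast
qed

definition Inv_st :: "nat \<Rightarrow> st \<Rightarrow> bool" where
  "Inv_st n s \<longleftrightarrow>
     (\<forall>i j. mu s i = Some j \<longrightarrow> i \<in> {1..n} \<and> j \<in> {1..n} \<and> (i, j) \<in> intv s) \<and>
     (\<forall>i i' j. mu s i = Some j \<longrightarrow> mu s i' = Some j \<longrightarrow> i = i') \<and>
     (\<forall>i j. (i, j) \<in> rej s \<longrightarrow> (\<exists>i'. mu s i' = Some j))"

lemma InvD1: "Inv_st n s \<Longrightarrow> mu s i = Some j \<Longrightarrow> i \<in> {1..n} \<and> j \<in> {1..n} \<and> (i, j) \<in> intv s"
  unfolding Inv_st_def by (drule conjunct1) blast
lemma InvD2: "Inv_st n s \<Longrightarrow> mu s i = Some j \<Longrightarrow> mu s i' = Some j \<Longrightarrow> i = i'"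
  unfolding Inv_st_def by (drule conjunct2, drule conjunct1) blast
lemma InvD3: "Inv_st n s \<Longrightarrow> (i, j) \<in> rej s \<Longrightarrow> \<exists>i'. mu s i' = Some j"
  unfolding Inv_st_def by (drule conjunct2, drule conjunct2) blast
lemma InvI:
  assumes "\<And>i j. mu s i = Some j \<Longrightarrow> i \<in> {1..n} \<and> j \<in> {1..n} \<and> (i, j) \<in> intv s"
    "\<And>i i' j. mu s i = Some j \<Longrightarrow> mu s i' = Some j \<Longrightarrow> i = i'"
    "\<And>i j. (i, j) \<in> rej s \<Longrightarrow> \<exists>i'. mu s i' = Some j"
  shows "Inv_st n s"
  unfolding Inv_st_def using assms by blast

lemma proposers_ne:
  assumes inv: "Inv_st n s" and um: "unmatched n s \<noteq> {}"
  shows "proposers n s \<noteq> {}"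
proof
  assume P: "proposers n s = {}"
  obtain i0 where i0: "i0 \<in> {1..n}" "mu s i0 = None" using um unfolding unmatched_def by auto
  have "avail n s i0 = {}" using P i0 unfolding proposers_def unmatched_def by auto
  then have "\<forall>j\<in>{1..n}. (i0, j) \<in> rej s" unfolding avail_def by auto
  then have ex: "\<forall>j\<in>{1..n}. \<exists>i'. mu s i' = Some j"
  proof (intro ballI)
    fix j assume "\<forall>j\<in>{1..n}. (i0, j) \<in> rej s" "j \<in> {1..n}"
    then have "(i0, j) \<in> rej s" by simp
    then show "\<exists>i'. mu s i' = Some j" by (rule InvD3[OF inv])
  qed
  define f where "f j = (SOME i'. mu s i' = Some j)" for j
  have fj: "mu s (f j) = Some j" if jin: "j \<in> {1..n}" for j
  proof -
    have "\<exists>i'. mu s i' = Some j" using ex jin by (rule bspec)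
    then show ?thesis unfolding f_def by (rule someI_ex[where P="\<lambda>x. mu s x = Some j"])
  qed
  have "inj_on f {1..n}"
  proof (rule inj_onI)
    fix x y assume hx: "x \<in> {1..n}" and hy: "y \<in> {1..n}" and hf: "f x = f y"
    have "Some x = mu s (f x)" using fj[OF hx] by (rule sym)
    also have "\<dots> = mu s (f y)" using hf by (rule arg_cong)
    also have "\<dots> = Some y" using fj[OF hy] .
    finally show "x = y" by simp
  qed
  moreover have "f ` {1..n} \<subseteq> {1..n} - {i0}"
  proof
    fix x assume "x \<in> f ` {1..n}"
    then obtain j where j: "j \<in> {1..n}" "x = f j" by blast
    then have "mu s x = Some j" using fj by simp
    then show "x \<in> {1..n} - {i0}" using InvD1[OF inv] i0 by auto
  qed
  ultimately have "card {1..n} \<le> card ({1..n} - {i0})"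
    using card_inj_on_le[of f "{1..n}" "{1..n} - {i0}"] by simp
  then show False using i0 by auto
qed

lemma step_valid:
  assumes inv: "Inv_st n s" and um: "unmatched n s \<noteq> {}"
  shows "istar n u v eA eP s \<in> proposers n s \<and>
         beta n v eA s (istar n u v eA eP s) = jstar n v eA s \<and>
         jstar n v eA s \<in> avail n s (istar n u v eA eP s)"
proof -
  have ne: "proposers n s \<noteq> {}" by (rule proposers_ne[OF inv um])
  have finP: "finite (proposers n s)" unfolding proposers_def unmatched_def by auto
  have "jstar n v eA s \<in> beta n v eA s ` proposers n s"
    unfolding jstar_def using ne finP by (intro Min_in) auto
  define S where "S = {i \<in> proposers n s. beta n v eA s i = jstar n v eA s}"
  have Sne: "S \<noteq> {}" using \<open>jstar n v eA s \<in> _\<close> unfolding S_def by auto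
  have finS: "finite S" using finP unfolding S_def by auto
  have U: "\<exists>!i. i \<in> S \<and> (\<forall>i' \<in> S. i' \<noteq> i \<longrightarrow> prefP u eP (intv s) (jstar n v eA s) i i')"
    by (rule max_ex1[where R="\<lambda>a b. prefP u eP (intv s) (jstar n v eA s) a b", OF finS Sne prefP_trans prefP_asym prefP_tot])
  have E: "istar n u v eA eP s = (THE i. i \<in> S \<and> (\<forall>i' \<in> S. i' \<noteq> i \<longrightarrow> prefP u eP (intv s) (jstar n v eA s) i i'))"
    unfolding istar_def Let_def S_def by simp
  have "istar n u v eA eP s \<in> S \<and> (\<forall>i' \<in> S. i' \<noteq> istar n u v eA eP s \<longrightarrow> prefP u eP (intv s) (jstar n v eA s) (istar n u v eA eP s) i')"
    unfolding E by (rule theI'[OF U])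
  then have "istar n u v eA eP s \<in> S" by (rule conjunct1)
  then have "istar n u v eA eP s \<in> proposers n s" "beta n v eA s (istar n u v eA eP s) = jstar n v eA s"
    unfolding S_def by auto
  moreover have "avail n s (istar n u v eA eP s) \<noteq> {}"
    using \<open>istar n u v eA eP s \<in> proposers n s\<close> unfolding proposers_def by auto
  ultimately show ?thesis using beta_in[of n s "istar n u v eA eP s" v eA] by simp
qed

lemma partner_Some:
  assumes "Inv_st n s" "partner s j = Some i'"
  shows "mu s i' = Some j"
proof -
  have ex: "\<exists>i. mu s i = Some j" using assms(2) unfolding partner_def by (auto split: if_splits)
  then have "i' = (THE i. mu s i = Some j)" using assms(2) unfolding partner_def by auto
  moreover have "\<exists>!i. mu s i = Some j"
  proof -
    obtain i0 where i0: "mu s i0 = Some j" using ex by auto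
    show ?thesis
    proof (rule ex1I[of _ i0])
      show "mu s i0 = Some j" by (rule i0)
    next
      fix x assume "mu s x = Some j" then show "x = i0" using i0 by (rule InvD2[OF assms(1)])
    qed
  qed
  ultimately show ?thesis using theI'[of "\<lambda>i. mu s i = Some j"] by simp
qed

lemma partner_None:
  assumes "partner s j = None"
  shows "mu s i \<noteq> Some j"
  using assms unfolding partner_def by (auto split: if_splits)

lemma inv_step:
  assumes inv: "Inv_st n s" and um: "unmatched n s \<noteq> {}"
  shows "Inv_st n (alg_step n u v eA eP s)"
proof -
  define i where "i = istar n u v eA eP s"
  define j where "j = jstar n v eA s"
  have V: "i \<in> proposers n s" "j \<in> avail n s i"
    using step_valid[OF inv um] unfolding i_def j_def by auto
  then have iR: "i \<in> {1..n}" "mu s i = None" "j \<in> {1..n}"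
    unfolding proposers_def unmatched_def avail_def by auto
  have eq: "alg_step n u v eA eP s =
     (if (i, j) \<notin> intv s \<and> (i \<le> j \<or> better_than_cur u eP s j i)
      then s\<lparr>intv := insert (i, j) (intv s)\<rparr>
      else (case partner s j of
              Some i' \<Rightarrow>
                if prefP u eP (intv s) j i' i
                then s\<lparr>rej := insert (i, j) (rej s)\<rparr>
                else s\<lparr>mu := (mu s)(i' := None, i := Some j), rej := insert (i', j) (rej s)\<rparr>
            | None \<Rightarrow> s\<lparr>mu := (mu s)(i := Some j)\<rparr>))"
    unfolding alg_step_def Let_def i_def j_def by simp
  show ?thesis
  proof (cases "(i, j) \<notin> intv s \<and> (i \<le> j \<or> better_than_cur u eP s j i)")
    case True
    define s' where "s' = s\<lparr>intv := insert (i, j) (intv s)\<rparr>"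
    have st: "alg_step n u v eA eP s = s'" unfolding eq s'_def using True by simp
    have e: "mu s' = mu s" "intv s' = insert (i, j) (intv s)" "rej s' = rej s"
      unfolding s'_def by simp_all
    show ?thesis unfolding st
    proof (rule InvI)
      fix a b assume "mu s' a = Some b"
      then show "a \<in> {1..n} \<and> b \<in> {1..n} \<and> (a, b) \<in> intv s'"
        using InvD1[OF inv, of a b] unfolding e by simp
    next
      fix a a' b assume "mu s' a = Some b" "mu s' a' = Some b"
      then show "a = a'" using InvD2[OF inv, of a b a'] unfolding e by simp
    next
      fix a b assume "(a, b) \<in> rej s'"
      then show "\<exists>a'. mu s' a' = Some b" using InvD3[OF inv, of a b] unfolding e by simp
    qed
  next
    case F: False
    show ?thesis
    proof (cases "partner s j")
      case None
      have nm: "\<And>x. mu s x \<noteq> Some j" using partner_None[OF None] .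
      have ij: "(i, j) \<in> intv s" using F None unfolding better_than_cur_def by auto
      define s' where "s' = s\<lparr>mu := (mu s)(i := Some j)\<rparr>"
      have st: "alg_step n u v eA eP s = s'"
        unfolding eq if_not_P[OF F] s'_def using None by simp
      have e: "mu s' = (mu s)(i := Some j)" "intv s' = intv s" "rej s' = rej s"
        unfolding s'_def by simp_all
      show ?thesis unfolding st
      proof (rule InvI)
        fix a b assume "mu s' a = Some b"
        then have "a = i \<and> b = j \<or> a \<noteq> i \<and> mu s a = Some b" unfolding e by (auto split: if_splits)
        then show "a \<in> {1..n} \<and> b \<in> {1..n} \<and> (a, b) \<in> intv s'"
          using InvD1[OF inv, of a b] iR ij unfolding e by auto
      next
        fix a a' b assume "mu s' a = Some b" "mu s' a' = Some b"
        then have "a = i \<and> b = j \<or> a \<noteq> i \<and> mu s a = Some b" "a' = i \<and> b = j \<or> a' \<noteq> i \<and> mu s a' = Some b"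
          unfolding e by (auto split: if_splits)
        then show "a = a'" using InvD2[OF inv, of a b a'] nm[of a] nm[of a'] by auto
      next
        fix a b assume "(a, b) \<in> rej s'"
        then obtain x where x: "mu s x = Some b" using InvD3[OF inv, of a b] unfolding e by auto
        then have "x \<noteq> i" using iR by auto
        then show "\<exists>a'. mu s' a' = Some b" using x unfolding e by (intro exI[of _ x]) simp
      qed
    next
      case (Some i')
      have mi': "mu s i' = Some j" using partner_Some[OF inv Some] .
      have ne: "i' \<noteq> i" using mi' iR by auto
      show ?thesis
      proof (cases "prefP u eP (intv s) j i' i")
        case True
        define s' where "s' = s\<lparr>rej := insert (i, j) (rej s)\<rparr>"
        have st: "alg_step n u v eA eP s = s'"
          unfolding eq if_not_P[OF F] s'_def using Some True by simp
        have e: "mu s' = mu s" "intv s' = intv s" "rej s' = insert (i, j) (rej s)"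
          unfolding s'_def by simp_all
        show ?thesis unfolding st
        proof (rule InvI)
          fix a b assume "mu s' a = Some b"
          then show "a \<in> {1..n} \<and> b \<in> {1..n} \<and> (a, b) \<in> intv s'"
            using InvD1[OF inv, of a b] unfolding e by simp
        next
          fix a a' b assume "mu s' a = Some b" "mu s' a' = Some b"
          then show "a = a'" using InvD2[OF inv, of a b a'] unfolding e by simp
        next
          fix a b assume "(a, b) \<in> rej s'"
          then have "(a, b) = (i, j) \<or> (a, b) \<in> rej s" unfolding e by simp
          then show "\<exists>a'. mu s' a' = Some b"
          proof
            assume "(a, b) = (i, j)" then show ?thesis using mi' unfolding e by auto
          next
            assume "(a, b) \<in> rej s" then show ?thesis using InvD3[OF inv, of a b] unfolding e by simp
          qed
        qed
      next
        case False
        have bt: "better_than_cur u eP s j i = prefP u eP (intv s) j i i'"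
          using Some unfolding better_than_cur_def by simp
        have ij: "(i, j) \<in> intv s"
        proof (rule ccontr)
          assume "(i, j) \<notin> intv s"
          then have "\<not> prefP u eP (intv s) j i i'" using F bt by auto
          then show False using False ne unfolding prefP_def by auto
        qed
        define s' where "s' = s\<lparr>mu := (mu s)(i' := None, i := Some j), rej := insert (i', j) (rej s)\<rparr>"
        have st: "alg_step n u v eA eP s = s'"
          unfolding eq if_not_P[OF F] s'_def using Some False by simp
        have e: "mu s' = (mu s)(i' := None, i := Some j)" "intv s' = intv s" "rej s' = insert (i', j) (rej s)"
          unfolding s'_def by simp_all
        show ?thesis unfolding st
        proof (rule InvI)
          fix a b assume "mu s' a = Some b"
          then have "a = i \<and> b = j \<or> a \<noteq> i \<and> a \<noteq> i' \<and> mu s a = Some b" unfolding e by (auto split: if_splits)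
          then show "a \<in> {1..n} \<and> b \<in> {1..n} \<and> (a, b) \<in> intv s'"
            using InvD1[OF inv, of a b] iR ij unfolding e by auto
        next
          fix a a' b assume "mu s' a = Some b" "mu s' a' = Some b"
          then have A: "a = i \<and> b = j \<or> a \<noteq> i \<and> a \<noteq> i' \<and> mu s a = Some b"
            and B: "a' = i \<and> b = j \<or> a' \<noteq> i \<and> a' \<noteq> i' \<and> mu s a' = Some b"
            unfolding e by (auto split: if_splits)
          have "a' = i'" if "a' \<noteq> i" "mu s a' = Some j" using InvD2[OF inv, of a' j i'] that mi' by simp
          moreover have "a = i'" if "a \<noteq> i" "mu s a = Some j" using InvD2[OF inv, of a j i'] that mi' by simp
          ultimately show "a = a'" using A B InvD2[OF inv, of a b a'] by auto
        next
          fix a b assume "(a, b) \<in> rej s'"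
          then have "(a, b) = (i', j) \<or> (a, b) \<in> rej s" unfolding e by simp
          then show "\<exists>a'. mu s' a' = Some b"
          proof
            assume "(a, b) = (i', j)" then show ?thesis unfolding e by (intro exI[of _ i]) auto
          next
            assume "(a, b) \<in> rej s"
            then obtain x where x: "mu s x = Some b" using InvD3[OF inv, of a b] by auto
            show ?thesis
            proof (cases "x = i'")
              case True then have "b = j" using x mi' by simp
              then show ?thesis unfolding e by (intro exI[of _ i]) auto
            next
              case False
              then have "x \<noteq> i" using x iR by auto
              then show ?thesis using False x unfolding e by (intro exI[of _ x]) auto
            qed
          qed
        qed
      qed
    qed
  qed
qed

lemma reach_inv:
  assumes "reachable n u v eA eP s"
  shows "Inv_st n s"
  using assms unfolding reachable_def
proof (induction rule: rtranclp_induct)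
  case base
  then show ?case unfolding Inv_st_def init_st_def by simp
next
  case (step y z)
  then show ?case using inv_step unfolding loop_step_def by blast
qed

theorem claim2p6:
  fixes n :: nat and u v :: "nat \<Rightarrow> real" and eA eP :: "nat \<Rightarrow> nat \<Rightarrow> real" and s :: st
  assumes "\<forall>i \<in> {1..n}. \<forall>i' \<in> {1..n}. i \<le> i' \<longrightarrow> u i' \<le> u i"
    and "\<forall>j \<in> {1..n}. \<forall>j' \<in> {1..n}. j \<le> j' \<longrightarrow> v j' \<le> v j"
    and "event_2_4 n u v eA eP"
    and "considering n u v eA eP s"
  shows "\<forall>k \<le> jstar n v eA s.
           real (card {(i, j). i \<in> {1..n} \<and> mu s i = Some j \<and> i < k \<and> k \<le> j})
             \<le> 8 * log 2 (real n)"
proof (intro allI impI)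
  fix k assume kj: "k \<le> jstar n v eA s"
  define L where "L = 8 * log 2 (real n)"
  define X where "X = {(i, j). i \<in> {1..n} \<and> mu s i = Some j \<and> i < k \<and> k \<le> j}"
  have reach: "reachable n u v eA eP s" and um: "unmatched n s \<noteq> {}"
    using assms(4) unfolding considering_def by auto
  have inv: "Inv_st n s" using reach_inv[OF reach] .
  have inv1: "\<forall>a b. mu s a = Some b \<longrightarrow> a \<in> {1..n} \<and> b \<in> {1..n} \<and> (a, b) \<in> intv s"
  proof (intro allI impI)
    fix a b assume "mu s a = Some b" then show "a \<in> {1..n} \<and> b \<in> {1..n} \<and> (a, b) \<in> intv s" by (rule InvD1[OF inv])
  qed
  have inv2: "\<forall>a a' b. mu s a = Some b \<longrightarrow> mu s a' = Some b \<longrightarrow> a = a'"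
  proof (intro allI impI)
    fix a a' b assume "mu s a = Some b" "mu s a' = Some b" then show "a = a'" by (rule InvD2[OF inv])
  qed
  have evA: "\<forall>(i, j) \<in> intv s. real i \<le> real j + L"
    using assms(3) reach unfolding event_2_4_def L_def by blast
  have evB: "\<forall>j' \<in> {1..n}. real j' < min (real (jstar n v eA s)) (real n - L) \<longrightarrow> (\<exists>i. mu s i = Some j')"
    using assms(3) assms(4) unfolding event_2_4_def L_def by blast
  have jn: "jstar n v eA s \<in> {1..n}"
    using step_valid[OF inv um, of u v eA eP] unfolding avail_def by auto
  have n1: "n \<ge> 1" using jn by auto
  have L0: "L \<ge> 0" unfolding L_def using n1 by simp
  have finX: "finite X"
  proof -
    have "X \<subseteq> {1..n} \<times> {1..n}" unfolding X_def using inv1 by auto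
    then show ?thesis by (rule finite_subset) auto
  qed
  have "real (card X) \<le> L"
  proof (cases "\<exists>j' \<in> {1..<k}. \<forall>i. mu s i \<noteq> Some j'")
    case True
    then obtain j' where j': "j' \<in> {1..<k}" "\<forall>i. mu s i \<noteq> Some j'" by blast
    have "j' \<in> {1..n}" using j' kj jn by auto
    then have "\<not> real j' < min (real (jstar n v eA s)) (real n - L)" using evB j'(2) by auto
    moreover have "real j' < real (jstar n v eA s)" using j' kj by simp
    ultimately have jL: "real n - L \<le> real j'" by linarith
    have "inj_on snd X"
    proof (rule inj_onI)
      fix p q assume pq: "p \<in> X" "q \<in> X" "snd p = snd q"
      obtain a b a' b' where ab: "p = (a, b)" "q = (a', b')" by fastforce
      then have h: "mu s a = Some b" "mu s a' = Some b'" "b = b'" using pq unfolding X_def by auto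
      then have "mu s a' = Some b" by simp
      with h(1) have "a = a'" by (rule InvD2[OF inv])
      then show "p = q" using ab \<open>b = b'\<close> by simp
    qed
    moreover have "snd ` X \<subseteq> {k..n}" unfolding X_def using inv1 by auto
    ultimately have "card X \<le> card {k..n}"
      using card_inj_on_le[of snd X "{k..n}"] by simp
    then have "real (card X) \<le> real (n + 1 - k)" by simp
    also have "\<dots> = real n + 1 - real k" using kj jn by auto
    also have "\<dots> \<le> L" using jL j' by auto
    finally show ?thesis .
  next
    case False
    then have allm: "\<forall>j' \<in> {1..<k}. \<exists>i. mu s i = Some j'" by blast
    define g where "g j' = (SOME i. mu s i = Some j')" for j'
    have gj: "mu s (g j') = Some j'" if jin: "j' \<in> {1..<k}" for j'
    proof -
      have "\<exists>i'. mu s i' = Some j'" using allm jin by (rule bspec)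
      then show ?thesis unfolding g_def by (rule someI_ex[where P="\<lambda>x. mu s x = Some j'"])
    qed
    have injg: "inj_on g {1..<k}"
    proof (rule inj_onI)
      fix x y assume hx: "x \<in> {1..<k}" and hy: "y \<in> {1..<k}" and hf: "g x = g y"
      have "Some x = mu s (g x)" using gj[OF hx] by (rule sym)
      also have "\<dots> = mu s (g y)" using hf by (rule arg_cong)
      also have "\<dots> = Some y" using gj[OF hy] .
      finally show "x = y" by simp
    qed
    define m where "m = nat \<lfloor>real k - 1 + L\<rfloor>"
    have T: "g ` {1..<k} \<subseteq> {1..m}"
    proof
      fix x assume "x \<in> g ` {1..<k}"
      then obtain j' where jj: "j' \<in> {1..<k}" "x = g j'" by auto
      have "mu s x = Some j'" using gj jj by simp
      then have "x \<in> {1..n}" "(x, j') \<in> intv s" using inv1 by auto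
      then have "real x \<le> real j' + L" using evA by auto
      also have "\<dots> \<le> real k - 1 + L" using jj by auto
      finally have "x \<le> m" unfolding m_def by (rule le_nat_floor)
      then show "x \<in> {1..m}" using \<open>x \<in> {1..n}\<close> by auto
    qed
    have "inj_on fst X" unfolding X_def by (auto intro!: inj_onI)
    then have cX: "card X = card (fst ` X)" by (simp add: card_image)
    have S: "fst ` X \<subseteq> {1..m}"
    proof
      fix x assume "x \<in> fst ` X"
      then have "x \<in> {1..n}" "x < k" unfolding X_def by auto
      then have "real x \<le> real k - 1 + L" using L0 by auto
      then have "x \<le> m" unfolding m_def by (rule le_nat_floor)
      then show "x \<in> {1..m}" using \<open>x \<in> {1..n}\<close> by auto
    qed
    have disj: "fst ` X \<inter> g ` {1..<k} = {}"
    proof (rule equals0I)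
      fix x assume "x \<in> fst ` X \<inter> g ` {1..<k}"
      then have x1: "x \<in> fst ` X" and x2: "x \<in> g ` {1..<k}" by auto
      from x1 obtain p where p: "p \<in> X" "x = fst p" by blast
      from x2 obtain j' where jj: "j' \<in> {1..<k}" "x = g j'" by blast
      have "mu s x = Some (snd p)" "k \<le> snd p" using p unfolding X_def by auto
      moreover have "mu s x = Some j'" "j' < k" using gj jj by auto
      ultimately show False by simp
    qed
    have "card (fst ` X \<union> g ` {1..<k}) \<le> card {1..m}"
      using S T by (intro card_mono) auto
    moreover have "card (fst ` X \<union> g ` {1..<k}) = card (fst ` X) + card (g ` {1..<k})"
      using disj finX by (intro card_Un_disjoint) auto
    moreover have "card (g ` {1..<k}) = k - 1" using injg by (simp add: card_image)
    ultimately have le: "card X + (k - 1) \<le> m" using cX by simp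
    show ?thesis
    proof (cases "k = 0")
      case True
      then have "X = {}" unfolding X_def by auto
      then show ?thesis using L0 by simp
    next
      case False
      have "real m \<le> real k - 1 + L" unfolding m_def using False L0 by (intro of_nat_floor) auto
      moreover have "real (card X + (k - 1)) \<le> real m" using le by (simp only: of_nat_le_iff)
      moreover have "real (card X + (k - 1)) = real (card X) + real k - 1" using False by (simp add: of_nat_diff)
      ultimately show ?thesis by linarith
    qed
  qed
  then show "real (card {(i, j). i \<in> {1..n} \<and> mu s i = Some j \<and> i < k \<and> k \<le> j}) \<le> 8 * log 2 (real n)"
    unfolding X_def L_def .
qed

end
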